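(* Let $d\in\mathbb N$, $\varepsilon\in(0,1]$, and let $h=h(d,\varepsilon)$ be the height of Thiémard's partition as defined in the context. Let $r\in\{1,\dots,h\}$ and $\boldsymbol i,\boldsymbol j\in S^r$ with $i_\nu\le j_\nu$ for $\nu=1,\dots,r$, and assume both $Q^{(r)}_{\boldsymbol i}$ and $Q^{(r)}_{\boldsymbol j}$ are generated in the decomposition process. Then $$W(Q^{(r)}_{\boldsymbol i})\ge W(Q^{(r)}_{\boldsymbol j}),$$ and, if $W(Q^{(r)}_{\boldsymbol j})>\varepsilon$, $$\delta^{Q^{(r)}_{\boldsymbol i}}\ge \delta^{Q^{(r)}_{\boldsymbol j}}.$$ The first inequality is strict if and only if $i_\nu<j_\nu$ for some $\nu\in\{1,\dots,r-1\}$; the second inequality is strict if and only if $i_\nu<j_\nu$ for some $\nu\in\{1,\dots,r\}$.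
   Context: Fix $d\in\mathbb N$ and $\varepsilon\in(0,1]$. For $x,y\in[0,1]^d$ write $[x,y)=\prod_{i=1}^d[x_i,y_i)$ and define the weight $W([x,y))=\prod_{i=1}^d y_i-\prod_{i=1}^d x_i$. Thiémard's decomposition process generates boxes, each with a type in $\{1,\dots,d+1\}$. It starts with $I^d=[0,1)^d=[(0,\dots,0),(1,\dots,1))$, of type $1$. Whenever a generated box $P=[\alpha,\beta)$ has type $j\le d$ and $W(P)>\varepsilon$, it is decomposed (procedure DECOMPOSE$(P,j)$) as follows: put $$\delta^P=\left(\frac{\prod_{i=1}^d\beta_i-\varepsilon}{\prod_{i=1}^{j-1}\alpha_i\prod_{i=j}^d\beta_i}\right)^{1/(d-j+1)},\qquad \gamma^P_i=\alpha_i\ (i<j),\quad \gamma^P_i=\delta^P\beta_i\ (i\ge j).$$ The children of $P$ are the boxes $Q^P_k=[a^{(k)},b^{(k)})$ for $k=j,\dots,d$, where $a^{(k)}_i=\gamma^P_i$ for $i<k$, $a^{(k)}_i=\alpha_i$ for $i\ge k$, $b^{(k)}_k=\gamma^P_k$, $b^{(k)}_i=\beta_i$ for $i\neq k$; the box $Q^P_k$ has type $k$. In addition $P$ has the child $Q^P_{d+1}=[\gamma^P,\beta)$ of type $d+1$. A generated box of type $d+1$ or of weight at most $\varepsilon$ is not decomposed. (Known facts from Thiémard: $\delta^P\in(0,1)$; the process terminates after finitely many steps; $W(Q^P_{d+1})=\varepsilon$ and $W(Q^P_k)=\delta^PW(P)$ for $j\le k\le d$.) Indexing: for $r\in\mathbb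 N$ let $S^r=\{\boldsymbol i\in\mathbb N^r: 1\le i_1\le i_2\le\dots\le i_r\le d\}$, $S^0=\{0\}$, and $\mathbf 1_r=(1,\dots,1)\in\mathbb N^r$. Put $Q^{(0)}_0=I^d$, $Q^{(1)}_{j_1}=Q^{I^d}_{j_1}$ ($j_1=1,\dots,d$, defined when $W(I^d)>\varepsilon$), and for $\boldsymbol j\in S^r$ with $Q^{(r)}_{\boldsymbol j}$ generated and $W(Q^{(r)}_{\boldsymbol j})>\varepsilon$, $Q^{(r+1)}_{(\boldsymbol j,j_{r+1})}=Q^{Q^{(r)}_{\boldsymbol j}}_{j_{r+1}}$ for $j_{r+1}=j_r,\dots,d$. The height $h=h(d,\varepsilon)$ of the partition is $0$ if $W(I^d)\le\varepsilon$, and otherwise the largest $h\in\mathbb N$ such that there is $\boldsymbol j\in S^{h-1}$ with $Q^{(h-1)}_{\boldsymbol j}$ generated and $W(Q^{(h-1)}_{\boldsymbol j})>\varepsilon$. *)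

theory Defs
  imports Complex_Main
begin

text \<open>Boxes [x,y) in [0,1]^d are represented by pairs (x,y) of functions nat => real,
  where only the coordinates 1..d are relevant.\<close>

type_synonym box = "(nat \<Rightarrow> real) \<times> (nat \<Rightarrow> real)"

definition W :: "nat \<Rightarrow> box \<Rightarrow> real" where
  "W d P = (\<Prod>i\<in>{1..d}. snd P i) - (\<Prod>i\<in>{1..d}. fst P i)"

definition unit_box :: box where
  "unit_box = ((\<lambda>_. 0), (\<lambda>_. 1))"

definition delta :: "nat \<Rightarrow> real \<Rightarrow> nat \<Rightarrow> box \<Rightarrow> real" where
  "delta d eps j P =
     root (d - j + 1)
       (((\<Prod>i\<in>{1..d}. snd P i) - eps) /
        ((\<Prod>i\<in>{1..<j}. fst P i) * (\<Prod>i\<in>{j..d}. snd P i)))"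

definition gamma :: "nat \<Rightarrow> real \<Rightarrow> nat \<Rightarrow> box \<Rightarrow> nat \<Rightarrow> real" where
  "gamma d eps j P i = (if i < j then fst P i else delta d eps j P * snd P i)"

definition child :: "nat \<Rightarrow> real \<Rightarrow> nat \<Rightarrow> box \<Rightarrow> nat \<Rightarrow> box" where
  "child d eps j P k =
     ((\<lambda>i. if i < k then gamma d eps j P i else fst P i),
      (\<lambda>i. if i = k then gamma d eps j P k else snd P i))"

text \<open>Q^{(r)}_js together with its type (type of I^d is 1, type of Q^{(r)}_js is the last entry).
  The index js = (j_1,...,j_r) is a list of length r.\<close>
definition Qt :: "nat \<Rightarrow> real \<Rightarrow> nat list \<Rightarrow> box \<times> nat" where
  "Qt d eps js = foldl (\<lambda>(P, t) k. (child d eps t P k, k)) (unit_box, 1) js"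

definition Q :: "nat \<Rightarrow> real \<Rightarrow> nat list \<Rightarrow> box" where
  "Q d eps js = fst (Qt d eps js)"

definition inS :: "nat \<Rightarrow> nat list \<Rightarrow> bool" where
  "inS d js \<longleftrightarrow> sorted js \<and> (\<forall>k\<in>set js. 1 \<le> k \<and> k \<le> d)"

text \<open>Q^{(r)}_js is generated: every proper ancestor has weight > eps (and was hence decomposed).\<close>
definition generated :: "nat \<Rightarrow> real \<Rightarrow> nat list \<Rightarrow> bool" where
  "generated d eps js \<longleftrightarrow> (\<forall>m < length js. W d (Q d eps (take m js)) > eps)"

definition height :: "nat \<Rightarrow> real \<Rightarrow> nat" where
  "height d eps =
     (if W d unit_box \<le> eps then 0
      else Suc (GREATEST m. \<exists>js. length js = m \<and> inS d js \<and> generated d eps js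
                                   \<and> W d (Q d eps js) > eps))"

end

theory Submission imports Defs begin

definition tp :: "nat \<Rightarrow> real \<Rightarrow> nat list \<Rightarrow> nat" where
  "tp d eps xs = snd (Qt d eps xs)"
definition pw :: "nat \<Rightarrow> real \<Rightarrow> nat list \<Rightarrow> real" where
  "pw d eps xs = (\<Prod>i\<in>{1..d}. snd (Q d eps xs) i)"
definition pq :: "nat \<Rightarrow> real \<Rightarrow> nat list \<Rightarrow> real" where
  "pq d eps xs = (\<Prod>i\<in>{1..<tp d eps xs}. fst (Q d eps xs) i) * (\<Prod>i\<in>{tp d eps xs..d}. snd (Q d eps xs) i)"
definition dl :: "nat \<Rightarrow> real \<Rightarrow> nat list \<Rightarrow> real" where
  "dl d eps xs = delta d eps (tp d eps xs) (Q d eps xs)"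
definition G :: "real \<Rightarrow> nat \<Rightarrow> real \<Rightarrow> real \<Rightarrow> real" where
  "G eps m w x = x * root m ((x*w - eps)/(x*(w-eps)))"

lemma Qt_snoc: "Qt d eps (xs@[k]) = (child d eps (tp d eps xs) (Q d eps xs) k, k)"
  by (simp add: Qt_def Q_def tp_def split: prod.split)

lemma Q_snoc: "Q d eps (xs@[k]) = child d eps (tp d eps xs) (Q d eps xs) k"
  by (simp add: Q_def Qt_snoc)

lemma tp_snoc: "tp d eps (xs@[k]) = k"
  by (simp add: tp_def Qt_snoc)

lemma tp_Nil: "tp d eps [] = 1"
  by (simp add: tp_def Qt_def)

lemma Q_Nil: "Q d eps [] = unit_box"
  by (simp add: Q_def Qt_def)

lemma prod_split_mid:
  fixes f :: "nat \<Rightarrow> real"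
  assumes "t \<le> k" "k \<le> d"
  shows "prod f {t..d} = prod f {t..<k} * prod f {k..d}"
proof -
  have "prod f {t..<k} * prod f {k..<Suc d} = prod f {t..<Suc d}"
    using assms by (intro prod.atLeastLessThan_concat) auto
  then show ?thesis by (simp add: atLeastLessThanSuc_atLeastAtMost)
qed

lemma child_snd_prod:
  assumes "1 \<le> t" "t \<le> k" "k \<le> d"
  shows "(\<Prod>i\<in>{1..d}. snd (child d eps t P k) i) = delta d eps t P * (\<Prod>i\<in>{1..d}. snd P i)"
proof -
  have k: "k \<in> {1..d}" using assms by auto
  have "(\<Prod>i\<in>{1..d}. snd (child d eps t P k) i) = snd (child d eps t P k) k * (\<Prod>i\<in>{1..d}-{k}. snd (child d eps t P k) i)"
    using k by (simp add: prod.remove)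
  also have "\<dots> = (delta d eps t P * snd P k) * (\<Prod>i\<in>{1..d}-{k}. snd P i)"
    using assms by (simp add: child_def gamma_def)
  also have "\<dots> = delta d eps t P * (\<Prod>i\<in>{1..d}. snd P i)"
    using k by (simp add: prod.remove)
  finally show ?thesis .
qed

lemma child_q:
  assumes "1 \<le> t" "t \<le> k" "k \<le> d"
  shows "(\<Prod>i\<in>{1..<k}. fst (child d eps t P k) i) * (\<Prod>i\<in>{k..d}. snd (child d eps t P k) i)
     = delta d eps t P ^ (k - t + 1) * ((\<Prod>i\<in>{1..<t}. fst P i) * (\<Prod>i\<in>{t..d}. snd P i))"
proof -
  define x where "x = delta d eps t P"
  define C where "C = child d eps t P k"
  have 1: "(\<Prod>i\<in>{1..<k}. fst C i) = (\<Prod>i\<in>{1..<t}. fst C i) * (\<Prod>i\<in>{t..<k}. fst C i)"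
    using assms by (simp add: prod.atLeastLessThan_concat)
  have 2: "(\<Prod>i\<in>{1..<t}. fst C i) = (\<Prod>i\<in>{1..<t}. fst P i)"
    using assms by (intro prod.cong) (auto simp: C_def child_def gamma_def)
  have 3: "(\<Prod>i\<in>{t..<k}. fst C i) = (\<Prod>i\<in>{t..<k}. x * snd P i)"
    using assms by (intro prod.cong) (auto simp: C_def child_def gamma_def x_def)
  have 4: "(\<Prod>i\<in>{t..<k}. x * snd P i) = x ^ (k - t) * (\<Prod>i\<in>{t..<k}. snd P i)"
    by (simp add: prod.distrib)
  have 5: "(\<Prod>i\<in>{k..d}. snd C i) = snd C k * (\<Prod>i\<in>{Suc k..d}. snd C i)"
    using assms by (simp add: prod.atLeast_Suc_atMost)
  have 6: "snd C k = x * snd P k"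
    using assms by (simp add: C_def child_def gamma_def x_def)
  have 7: "(\<Prod>i\<in>{Suc k..d}. snd C i) = (\<Prod>i\<in>{Suc k..d}. snd P i)"
    by (intro prod.cong) (auto simp: C_def child_def)
  have 8: "(\<Prod>i\<in>{t..d}. snd P i) = (\<Prod>i\<in>{t..<k}. snd P i) * (snd P k * (\<Prod>i\<in>{Suc k..d}. snd P i))"
  proof -
    have a: "(\<Prod>i\<in>{t..d}. snd P i) = (\<Prod>i\<in>{t..<k}. snd P i) * (\<Prod>i\<in>{k..d}. snd P i)"
      using assms(2,3) by (rule prod_split_mid)
    have b: "(\<Prod>i\<in>{k..d}. snd P i) = snd P k * (\<Prod>i\<in>{Suc k..d}. snd P i)"
      using assms(3) by (rule prod.atLeast_Suc_atMost)
    show ?thesis using a b by simp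
  qed
  have 9: "x ^ (k - t + 1) = x ^ (k - t) * x" by simp
  show ?thesis
    unfolding C_def[symmetric] x_def[symmetric] 1 2 3 4 5 6 7 8 9
    by (simp add: algebra_simps)
qed

lemma inS_snoc: "inS d (xs@[k]) \<Longrightarrow> inS d xs \<and> 1 \<le> k \<and> k \<le> d \<and> tp d eps xs \<le> k"
  by (cases xs rule: rev_cases) (auto simp: inS_def sorted_append tp_snoc tp_Nil)

lemma tp_range: "inS d xs \<Longrightarrow> 1 \<le> d \<Longrightarrow> 1 \<le> tp d eps xs \<and> tp d eps xs \<le> d"
  by (cases xs rule: rev_cases) (auto simp: inS_def tp_snoc tp_Nil)

lemma generated_snoc: "generated d eps (xs@[k]) \<Longrightarrow> generated d eps xs \<and> W d (Q d eps xs) > eps"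
proof -
  assume g: "generated d eps (xs@[k])"
  have "W d (Q d eps (take (length xs) (xs@[k]))) > eps" using g unfolding generated_def by auto
  moreover have "\<forall>m<length xs. W d (Q d eps (take m (xs@[k]))) > eps" using g unfolding generated_def by auto
  ultimately show ?thesis unfolding generated_def by simp
qed

lemma fst_zero: "inS d xs \<Longrightarrow> i \<ge> tp d eps xs \<Longrightarrow> fst (Q d eps xs) i = 0"
proof (induction xs arbitrary: i rule: rev_induct)
  case Nil
  then show ?case by (simp add: Q_Nil unit_box_def)
next
  case (snoc k xs)
  from inS_snoc[OF snoc.prems(1)] have h: "inS d xs" "tp d eps xs \<le> k" by auto
  have "i \<ge> k" using snoc.prems(2) by (simp add: tp_snoc)
  then show ?case using snoc.IH[OF h(1)] h(2) by (simp add: Q_snoc child_def)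
qed

lemma W_pw: "inS d xs \<Longrightarrow> 1 \<le> d \<Longrightarrow> W d (Q d eps xs) = pw d eps xs"
proof -
  assume a: "inS d xs" "1 \<le> d"
  have "(\<Prod>i\<in>{1..d}. fst (Q d eps xs) i) = 0"
  proof (rule prod_zero)
    show "\<exists>i\<in>{1..d}. fst (Q d eps xs) i = 0"
      using tp_range[OF a, of eps] fst_zero[OF a(1) order_refl] by (intro bexI[of _ "tp d eps xs"]) auto
  qed simp
  then show ?thesis by (simp add: W_def pw_def)
qed

lemma pw_snoc: "inS d (xs@[k]) \<Longrightarrow> 1 \<le> d \<Longrightarrow> pw d eps (xs@[k]) = dl d eps xs * pw d eps xs"
proof -
  assume a: "inS d (xs@[k])" "1 \<le> d"
  from inS_snoc[OF a(1)] tp_range[OF _ a(2)] have "1 \<le> tp d eps xs" "tp d eps xs \<le> k" "k \<le> d" by auto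
  then show ?thesis unfolding pw_def dl_def Q_snoc by (rule child_snd_prod)
qed

lemma pq_snoc: "inS d (xs@[k]) \<Longrightarrow> 1 \<le> d \<Longrightarrow> pq d eps (xs@[k]) = dl d eps xs ^ (k - tp d eps xs + 1) * pq d eps xs"
proof -
  assume a: "inS d (xs@[k])" "1 \<le> d"
  from inS_snoc[OF a(1)] tp_range[OF _ a(2)] have "1 \<le> tp d eps xs" "tp d eps xs \<le> k" "k \<le> d" by auto
  then show ?thesis unfolding pq_def dl_def Q_snoc tp_snoc by (rule child_q)
qed

lemma dl_eq: "dl d eps xs = root (d - tp d eps xs + 1) ((pw d eps xs - eps) / pq d eps xs)"
  by (simp add: dl_def delta_def pw_def pq_def)

lemma pq_pos: "inS d xs \<Longrightarrow> generated d eps xs \<Longrightarrow> 1 \<le> d \<Longrightarrow> 0 < pq d eps xs"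
proof (induction xs rule: rev_induct)
  case Nil
  then show ?case by (simp add: pq_def tp_Nil Q_Nil unit_box_def)
next
  case (snoc k xs)
  from inS_snoc[OF snoc.prems(1)] have h: "inS d xs" by auto
  from generated_snoc[OF snoc.prems(2)] have g: "generated d eps xs" "W d (Q d eps xs) > eps" by auto
  have q: "0 < pq d eps xs" using snoc.IH[OF h g(1) snoc.prems(3)] .
  have "pw d eps xs > eps" using g(2) W_pw[OF h snoc.prems(3)] by simp
  then have "0 < dl d eps xs" unfolding dl_eq using q by (intro real_root_gt_zero) auto
  then show ?case using q pq_snoc[OF snoc.prems(1,3)] by simp
qed

lemma dl_snoc:
  assumes a: "inS d (xs@[k])" "generated d eps (xs@[k])" "1 \<le> d" "0 < eps"
  shows "dl d eps (xs@[k]) = G eps (d-k+1) (pw d eps xs) (dl d eps xs)"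
proof -
  from inS_snoc[OF a(1)] tp_range[OF _ a(3)] have h: "inS d xs" "1 \<le> tp d eps xs" "tp d eps xs \<le> k" "k \<le> d" by auto
  from generated_snoc[OF a(2)] have g: "generated d eps xs" "W d (Q d eps xs) > eps" by auto
  define t where "t = tp d eps xs"
  define x where "x = dl d eps xs"
  define w where "w = pw d eps xs"
  define q where "q = pq d eps xs"
  have q: "0 < q" unfolding q_def using pq_pos[OF h(1) g(1) a(3)] .
  have w: "w > eps" using g(2) W_pw[OF h(1) a(3)] by (simp add: w_def)
  have xr: "x = root (d - t + 1) ((w - eps) / q)" by (simp add: x_def dl_eq t_def w_def q_def)
  have x: "0 < x" unfolding xr using q w by (intro real_root_gt_zero) auto
  have hx: "x ^ (d - t + 1) = (w - eps) / q" unfolding xr using q w by (intro real_root_pow_pos2) auto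
  obtain n1 n2 where n: "k - t = n1" "d - k = n2" by blast
  have e1: "d - t + 1 = n1 + n2 + 1" "k - t + 1 = n1 + 1" "d - k + 1 = n2 + 1"
    using n h unfolding t_def by auto
  have qe: "q = (w - eps) / x ^ (n1 + n2 + 1)"
    using hx x q w unfolding e1 by (simp add: field_simps)
  have "dl d eps (xs@[k]) = root (d - k + 1) ((x * w - eps) / (x ^ (k - t + 1) * q))"
    by (simp add: dl_eq tp_snoc pw_snoc[OF a(1,3)] pq_snoc[OF a(1,3)] x_def w_def t_def q_def)
  also have "(x * w - eps) / (x ^ (k - t + 1) * q) = x ^ (n2 + 1) * ((x*w - eps)/(x*(w-eps)))"
    unfolding e1 qe using x w by (simp add: field_simps power_add)
  also have "root (d - k + 1) (x ^ (n2 + 1) * ((x*w - eps)/(x*(w-eps)))) = x * root (d-k+1) ((x*w - eps)/(x*(w-eps)))"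
  proof -
    have "root (n2 + 1) (x ^ (n2 + 1)) = x" using x by (intro real_root_power_cancel) auto
    then show ?thesis unfolding e1 real_root_mult by simp
  qed
  finally show ?thesis by (simp add: G_def x_def w_def)
qed

lemma G_props:
  assumes "0 < eps" "1 \<le> m'" "m' \<le> m" "eps < w'" "w' \<le> w" "0 < x'" "x' \<le> x" "x < 1" "eps < x' * w'"
  shows "G eps m' w' x' \<le> G eps m w x \<and> ((m' < m \<or> x' < x) \<longrightarrow> G eps m' w' x' < G eps m w x)
     \<and> 0 < G eps m' w' x' \<and> G eps m w x < x"
proof -
  define r where "r = (x*w - eps)/(x*(w-eps))"
  define r' where "r' = (x'*w' - eps)/(x'*(w'-eps))"
  have rr: "r = 1 - eps*(1/x - 1)/(w-eps)" unfolding r_def using assms by (simp add: field_simps)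
  have rr': "r' = 1 - eps*(1/x' - 1)/(w'-eps)" unfolding r'_def using assms by (simp add: field_simps)
  have "1/x \<le> 1/x'" using assms by (simp add: frac_le)
  have "1 < 1/x" using assms by simp
  have "eps*(1/x - 1)/(w-eps) \<le> eps*(1/x' - 1)/(w'-eps)"
    using assms \<open>1/x \<le> 1/x'\<close> \<open>1 < 1/x\<close> by (intro frac_le mult_left_mono) auto
  then have r'r: "r' \<le> r" unfolding rr rr' by simp
  have r1: "r < 1" unfolding rr using assms \<open>1 < 1/x\<close> by (simp add: field_simps)
  have r'0: "0 < r'" unfolding r'_def using assms by (intro divide_pos_pos) auto
  have m: "0 < m'" "0 < m" using assms by auto
  have A: "root m' r \<le> root m r" using m r'r r'0 r1 assms by (intro real_root_increasing) auto
  have B: "root m' r' \<le> root m' r" using m r'r by (intro real_root_le_mono) auto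
  have C0: "0 < root m' r'" using m r'0 by (simp add: real_root_gt_zero)
  have G1: "G eps m' w' x' = x' * root m' r'" by (simp add: G_def r'_def)
  have G2: "G eps m w x = x * root m r" by (simp add: G_def r_def)
  have le: "x' * root m' r' \<le> x * root m r"
  proof -
    have AB: "root m' r' \<le> root m r" using A B by linarith
    show ?thesis using AB C0 assms by (intro mult_mono) auto
  qed
  have st: "(m' < m \<or> x' < x) \<longrightarrow> x' * root m' r' < x * root m r"
  proof
    assume "m' < m \<or> x' < x"
    then show "x' * root m' r' < x * root m r"
    proof
      assume "m' < m"
      then have "root m' r < root m r" using m r'r r'0 r1 by (intro real_root_strict_increasing) auto
      then have "root m' r' < root m r" using B by linarith
      then show ?thesis using C0 assms by (intro mult_le_less_imp_less) auto
    next
      assume "x' < x"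
      moreover have "root m' r' \<le> root m r" using A B by linarith
      ultimately show ?thesis using C0 assms by (intro mult_less_le_imp_less) auto
    qed
  qed
  have "root m r < 1" using m r1 by simp
  then have "x * root m r < x" using assms by simp
  then show ?thesis using G1 G2 le st C0 assms by simp
qed

lemma pw_Nil: "pw d eps [] = 1" by (simp add: pw_def Q_Nil unit_box_def)
lemma pq_Nil: "pq d eps [] = 1" by (simp add: pq_def tp_Nil Q_Nil unit_box_def)

lemma dl_range:
  assumes "inS d xs" "generated d eps xs" "1 \<le> d" "0 < eps" "eps < 1" "pw d eps xs > eps"
  shows "0 < dl d eps xs \<and> dl d eps xs < 1"
  using assms
proof (induction xs rule: rev_induct)
  case Nil
  have "dl d eps [] = root d (1 - eps)" using Nil by (simp add: dl_eq tp_Nil pw_Nil pq_Nil)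
  then show ?case using Nil by (simp add: real_root_gt_zero)
next
  case (snoc k xs)
  from inS_snoc[OF snoc.prems(1)] have h: "inS d xs" "k \<le> d" by auto
  from generated_snoc[OF snoc.prems(2)] have g: "generated d eps xs" "W d (Q d eps xs) > eps" by auto
  have w: "pw d eps xs > eps" using g(2) W_pw[OF h(1) snoc.prems(3)] by simp
  have IH: "0 < dl d eps xs" "dl d eps xs < 1" using snoc.IH[OF h(1) g(1) snoc.prems(3-5) w] by auto
  have e: "dl d eps (xs@[k]) = G eps (d-k+1) (pw d eps xs) (dl d eps xs)"
    using dl_snoc[OF snoc.prems(1,2,3,4)] .
  have xw: "eps < dl d eps xs * pw d eps xs" using snoc.prems(6) pw_snoc[OF snoc.prems(1,3)] by simp
  have "0 < G eps (d-k+1) (pw d eps xs) (dl d eps xs) \<and> G eps (d-k+1) (pw d eps xs) (dl d eps xs) < dl d eps xs"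
    using G_props[of eps "d-k+1" "d-k+1" "pw d eps xs" "pw d eps xs" "dl d eps xs" "dl d eps xs"] snoc.prems IH w xw
    by auto
  then show ?case using e IH by simp
qed

lemma mono:
  assumes "length iv = length jv" "\<forall>\<nu><length iv. iv!\<nu> \<le> jv!\<nu>" "inS d iv" "inS d jv"
    "generated d eps iv" "generated d eps jv" "1\<le>d" "0<eps" "eps<1"
  shows "pw d eps jv \<le> pw d eps iv \<and> ((\<exists>\<nu><length iv - 1. iv!\<nu> < jv!\<nu>) \<longrightarrow> pw d eps jv < pw d eps iv)
     \<and> (pw d eps jv > eps \<longrightarrow> dl d eps jv \<le> dl d eps iv \<and> ((\<exists>\<nu><length iv. iv!\<nu> < jv!\<nu>) \<longrightarrow> dl d eps jv < dl d eps iv))"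
  using assms
proof (induction iv arbitrary: jv rule: rev_induct)
  case Nil
  then show ?case by simp
next
  case (snoc a iv)
  obtain jv' b where jv: "jv = jv'@[b]" using snoc.prems(1) by (cases jv rule: rev_cases) auto
  have len: "length iv = length jv'" using snoc.prems(1) jv by simp
  have le: "\<forall>\<nu><length iv. iv!\<nu> \<le> jv'!\<nu>"
  proof (intro allI impI)
    fix \<nu> assume "\<nu> < length iv"
    then show "iv!\<nu> \<le> jv'!\<nu>" using snoc.prems(2) len jv by (auto simp: nth_append dest!: spec[of _ \<nu>])
  qed
  have "(iv@[a])!length iv \<le> jv!length iv" using snoc.prems(2) by (metis length_append_singleton lessI)
  then have ab: "a \<le> b" using len jv by (simp add: nth_append)
  have si: "inS d iv" and a: "a \<le> d" using inS_snoc[OF snoc.prems(3)] by auto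
  have sj: "inS d jv'" using inS_snoc[OF snoc.prems(4)[unfolded jv]] by auto
  from generated_snoc[OF snoc.prems(5)] have gi: "generated d eps iv" "W d (Q d eps iv) > eps" by auto
  from generated_snoc[OF snoc.prems(6)[unfolded jv]] have gj: "generated d eps jv'" "W d (Q d eps jv') > eps" by auto
  have wi: "pw d eps iv > eps" using gi(2) W_pw[OF si snoc.prems(7)] by simp
  have wj: "pw d eps jv' > eps" using gj(2) W_pw[OF sj snoc.prems(7)] by simp
  note IH = snoc.IH[OF len le si sj gi(1) gj(1) snoc.prems(7-9)]
  have di: "0 < dl d eps iv" "dl d eps iv < 1" using dl_range[OF si gi(1) snoc.prems(7-9) wi] by auto
  have dj: "0 < dl d eps jv'" "dl d eps jv' < 1" using dl_range[OF sj gj(1) snoc.prems(7-9) wj] by auto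
  have D: "dl d eps jv' \<le> dl d eps iv" "(\<exists>\<nu><length iv. iv!\<nu> < jv'!\<nu>) \<longrightarrow> dl d eps jv' < dl d eps iv"
    using IH wj by auto
  have P: "pw d eps jv' \<le> pw d eps iv" using IH by auto
  have pwi: "pw d eps (iv@[a]) = dl d eps iv * pw d eps iv" using pw_snoc[OF snoc.prems(3,7)] .
  have pwj: "pw d eps jv = dl d eps jv' * pw d eps jv'" using pw_snoc[OF snoc.prems(4)[unfolded jv] snoc.prems(7)] jv by simp
  have part1: "pw d eps jv \<le> pw d eps (iv@[a])"
    unfolding pwi pwj using D(1) P dj wj snoc.prems(8) by (intro mult_mono) auto
  have part2: "(\<exists>\<nu><length (iv@[a]) - 1. (iv@[a])!\<nu> < jv!\<nu>) \<longrightarrow> pw d eps jv < pw d eps (iv@[a])"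
  proof
    assume "\<exists>\<nu><length (iv@[a]) - 1. (iv@[a])!\<nu> < jv!\<nu>"
    then have "\<exists>\<nu><length iv. iv!\<nu> < jv'!\<nu>" using len jv by (auto simp: nth_append)
    then have "dl d eps jv' < dl d eps iv" using D(2) by blast
    then show "pw d eps jv < pw d eps (iv@[a])"
      unfolding pwi pwj using P dj wj di snoc.prems(8) by (intro mult_less_le_imp_less) auto
  qed
  have part3: "pw d eps jv > eps \<longrightarrow> dl d eps jv \<le> dl d eps (iv@[a]) \<and> ((\<exists>\<nu><length (iv@[a]). (iv@[a])!\<nu> < jv!\<nu>) \<longrightarrow> dl d eps jv < dl d eps (iv@[a]))"
  proof
    assume pj: "pw d eps jv > eps"
    have ei: "dl d eps (iv@[a]) = G eps (d-a+1) (pw d eps iv) (dl d eps iv)"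
      using dl_snoc[OF snoc.prems(3,5,7,8)] .
    have ej: "dl d eps jv = G eps (d-b+1) (pw d eps jv') (dl d eps jv')"
      using dl_snoc[OF snoc.prems(4)[unfolded jv] snoc.prems(6)[unfolded jv] snoc.prems(7,8)] jv by simp
    have b: "b \<le> d" using inS_snoc[OF snoc.prems(4)[unfolded jv]] by auto
    have GP: "G eps (d-b+1) (pw d eps jv') (dl d eps jv') \<le> G eps (d-a+1) (pw d eps iv) (dl d eps iv) \<and>
       ((d-b+1 < d-a+1 \<or> dl d eps jv' < dl d eps iv) \<longrightarrow> G eps (d-b+1) (pw d eps jv') (dl d eps jv') < G eps (d-a+1) (pw d eps iv) (dl d eps iv))"
      using G_props[of eps "d-b+1" "d-a+1" "pw d eps jv'" "pw d eps iv" "dl d eps jv'" "dl d eps iv"]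
        snoc.prems(8) ab wj P dj D(1) di pj pwj by auto
    have "(\<exists>\<nu><length (iv@[a]). (iv@[a])!\<nu> < jv!\<nu>) \<longrightarrow> (d-b+1 < d-a+1 \<or> dl d eps jv' < dl d eps iv)"
    proof
      assume "\<exists>\<nu><length (iv@[a]). (iv@[a])!\<nu> < jv!\<nu>"
      then obtain \<nu> where nu: "\<nu> < length (iv@[a])" "(iv@[a])!\<nu> < jv!\<nu>" by blast
      show "d-b+1 < d-a+1 \<or> dl d eps jv' < dl d eps iv"
      proof (cases "\<nu> < length iv")
        case True
        then have "iv!\<nu> < jv'!\<nu>" using nu len jv by (auto simp: nth_append)
        then show ?thesis using D(2) True by blast
      next
        case False
        then have "\<nu> = length iv" using nu by simp
        then have "a < b" using nu len jv by (metis nth_append_length)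
        then have "d-b+1 < d-a+1" using b by simp
        then show ?thesis by blast
      qed
    qed
    then show "dl d eps jv \<le> dl d eps (iv@[a]) \<and> ((\<exists>\<nu><length (iv@[a]). (iv@[a])!\<nu> < jv!\<nu>) \<longrightarrow> dl d eps jv < dl d eps (iv@[a]))"
      using GP ei ej by auto
  qed
  show ?case using part1 part2 part3 by blast
qed

theorem mainTheorem2:
  fixes d :: nat and eps :: real and r :: nat and iv jv :: "nat list"
  assumes "1 \<le> d" and "0 < eps" and "eps \<le> 1"
    and "1 \<le> r" and "r \<le> height d eps"
    and "length iv = r" and "length jv = r"
    and "inS d iv" and "inS d jv"
    and "\<forall>\<nu> < r. iv ! \<nu> \<le> jv ! \<nu>"
    and "generated d eps iv" and "generated d eps jv"
  shows "W d (Q d eps iv) \<ge> W d (Q d eps jv)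
     \<and> (W d (Q d eps jv) > eps \<longrightarrow>
          delta d eps (last iv) (Q d eps iv) \<ge> delta d eps (last jv) (Q d eps jv))
     \<and> (W d (Q d eps iv) > W d (Q d eps jv) \<longleftrightarrow> (\<exists>\<nu> < r - 1. iv ! \<nu> < jv ! \<nu>))
     \<and> (W d (Q d eps jv) > eps \<longrightarrow>
          (delta d eps (last iv) (Q d eps iv) > delta d eps (last jv) (Q d eps jv)
             \<longleftrightarrow> (\<exists>\<nu> < r. iv ! \<nu> < jv ! \<nu>)))"
proof -
  note as = assms
  have "height d eps \<noteq> 0" using as(4,5) by simp
  then have "\<not> W d unit_box \<le> eps" unfolding height_def by (auto split: if_splits)
  moreover have "W d unit_box = 1" using as(1) by (simp add: W_def unit_box_def)
  ultimately have e1: "eps < 1" by simp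
  have Wi: "W d (Q d eps iv) = pw d eps iv" using W_pw[OF as(8,1)] .
  have Wj: "W d (Q d eps jv) = pw d eps jv" using W_pw[OF as(9,1)] .
  have le: "\<forall>\<nu><length iv. iv!\<nu> \<le> jv!\<nu>" using as(6,10) by simp
  have M: "pw d eps jv \<le> pw d eps iv \<and> ((\<exists>\<nu><length iv - 1. iv!\<nu> < jv!\<nu>) \<longrightarrow> pw d eps jv < pw d eps iv)
     \<and> (pw d eps jv > eps \<longrightarrow> dl d eps jv \<le> dl d eps iv \<and> ((\<exists>\<nu><length iv. iv!\<nu> < jv!\<nu>) \<longrightarrow> dl d eps jv < dl d eps iv))"
    using mono[OF _ le as(8,9,11,12,1,2) e1] as(6,7) by simp
  have ne: "iv \<noteq> []" "jv \<noteq> []" using as(4,6,7) by auto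
  have li: "delta d eps (last iv) (Q d eps iv) = dl d eps iv"
    using ne(1) by (cases iv rule: rev_cases) (auto simp: dl_def tp_snoc)
  have lj: "delta d eps (last jv) (Q d eps jv) = dl d eps jv"
    using ne(2) by (cases jv rule: rev_cases) (auto simp: dl_def tp_snoc)
  have c3: "pw d eps jv < pw d eps iv \<Longrightarrow> \<exists>\<nu> < r - 1. iv ! \<nu> < jv ! \<nu>"
  proof (rule ccontr)
    assume lt: "pw d eps jv < pw d eps iv" and no: "\<not> (\<exists>\<nu> < r - 1. iv ! \<nu> < jv ! \<nu>)"
    have bb: "butlast iv = butlast jv"
    proof (rule nth_equalityI)
      show "length (butlast iv) = length (butlast jv)" using as(6,7) by simp
      fix \<nu> assume "\<nu> < length (butlast iv)"
      then have "\<nu> < r - 1" using as(6) by simp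
      then have "\<not> iv ! \<nu> < jv ! \<nu>" "iv ! \<nu> \<le> jv ! \<nu>" "\<nu> < length iv - 1" using no as(6,10) by auto
      then show "butlast iv ! \<nu> = butlast jv ! \<nu>" using as(6,7) by (simp add: nth_butlast)
    qed
    have "pw d eps iv = dl d eps (butlast iv) * pw d eps (butlast iv)"
      using pw_snoc[of d "butlast iv" "last iv" eps] as(8,1) ne(1) by simp
    moreover have "pw d eps jv = dl d eps (butlast jv) * pw d eps (butlast jv)"
      using pw_snoc[of d "butlast jv" "last jv" eps] as(9,1) ne(2) by simp
    ultimately show False using lt bb by simp
  qed
  have c4: "dl d eps jv < dl d eps iv \<Longrightarrow> \<exists>\<nu> < r. iv ! \<nu> < jv ! \<nu>"
  proof (rule ccontr)
    assume lt: "dl d eps jv < dl d eps iv" and no: "\<not> (\<exists>\<nu> < r. iv ! \<nu> < jv ! \<nu>)"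
    have "iv = jv"
    proof (rule nth_equalityI)
      show "length iv = length jv" using as(6,7) by simp
      fix \<nu> assume "\<nu> < length iv"
      then show "iv ! \<nu> = jv ! \<nu>" using no as(6,10) by (auto simp: le_less)
    qed
    then show False using lt by simp
  qed
  show ?thesis unfolding Wi Wj li lj using M c3 c4 as(6) by auto
qed

end
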